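(* Let $S$ be a basis of $\mathcal{M}$ with $\det(V_SV_S^\top)>0$ and let $C$ be a minimal $f$-violating cycle in $G(S)$. Then $C$ contains at most one arc of type $\mathrm{II}$.
   Context: Let $v_1,\ldots,v_n\in\mathbb{R}^d$ and $\mathcal{M}=([n],\mathcal{I})$ a matroid; a basis is an independent set of maximum size. For $S\subseteq[n]$, $V_S$ is the $d\times|S|$ matrix with columns $v_i$, $i\in S$; elements are identified with their vectors, and $S-v+u=(S\setminus\{v\})\cup\{u\}$. For a basis $S$ with $\det(V_SV_S^\top)>0$ put $\langle u,v\rangle_S=u^\top(V_SV_S^\top)^{-1}v$, $\|u\|_S^2=\langle u,u\rangle_S$. The exchange graph $G(S)$ is the directed bipartite multigraph on $[n]$ with parts $S$ and $[n]\setminus S$: for $v\in S$, $u\notin S$ there is a backward arc $v\to u$ of weight $0$ whenever $S-v+u\in\mathcal{I}$; for $u\notin S$, $v\in S$ with $S-v+u$ spanning $\mathbb{R}^d$ there are two forward arcs, of type $\mathrm{I}$: $u\xrightarrow{\mathrm{I}}v$ with weight $-\log|\langle u,v\rangle_S|$, and of type $\mathrm{II}$: $u\xrightarrow{\mathrm{II}}v$ with weight $-\log\sqrt{(1+\|u\|_S^2)(1-\|v\|_S^2)}$ (with $-\log 0=+\infty$). For a directed cycle $C$ in $G(S)$, $|C|$ is its number of arcs, $\mathrm{ver}(C)$ its vertex set, and $w(C)$ the sum of its arc weights. Let $f(1)=2$ and $f(i)=(i!)^{11}$ for $i\geq 2$. A cycle $C$ is $f$-violating if $w(C)<-\log f(|C|/2)$;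 it is minimal $f$-violating if it is $f$-violating and no cycle $C'$ in $G(S)$ with $\mathrm{ver}(C')\subsetneq\mathrm{ver}(C)$ is $f$-violating. *)

theory Defs
  imports "HOL-Analysis.Analysis"
begin

definition matroid :: "'a set \<Rightarrow> ('a set \<Rightarrow> bool) \<Rightarrow> bool" where
  "matroid E indep \<longleftrightarrow> finite E \<and>
     (\<forall>X. indep X \<longrightarrow> X \<subseteq> E) \<and> indep {} \<and>
     (\<forall>X Y. indep Y \<and> X \<subseteq> Y \<longrightarrow> indep X) \<and>
     (\<forall>X Y. indep X \<and> indep Y \<and> card X < card Y \<longrightarrow> (\<exists>y\<in>Y - X. indep (insert y X)))"

definition is_basis :: "('a set \<Rightarrow> bool) \<Rightarrow> 'a set \<Rightarrow> bool" where
  "is_basis indep S \<longleftrightarrow> indep S \<and> (\<forall>T. indep T \<longrightarrow> card T \<le> card S)"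

text \<open>V_S V_S^T = sum over i in S of v_i v_i^T.\<close>
definition gram :: "(nat \<Rightarrow> real^'d) \<Rightarrow> nat set \<Rightarrow> real^'d^'d" where
  "gram v S = (\<chi> a b. \<Sum>i\<in>S. v i $ a * v i $ b)"

definition ipS :: "(nat \<Rightarrow> real^'d) \<Rightarrow> nat set \<Rightarrow> real^'d \<Rightarrow> real^'d \<Rightarrow> real" where
  "ipS v S x y = x \<bullet> (matrix_inv (gram v S) *v y)"

definition nrmsqS :: "(nat \<Rightarrow> real^'d) \<Rightarrow> nat set \<Rightarrow> real^'d \<Rightarrow> real" where
  "nrmsqS v S x = ipS v S x x"

definition neglog :: "real \<Rightarrow> ereal" where
  "neglog x = (if x = 0 then \<infinity> else ereal (- ln x))"

datatype arc_type = Back | TypeI | TypeII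

type_synonym arc = "nat \<times> nat \<times> arc_type"

definition tl_of :: "arc \<Rightarrow> nat" where "tl_of e = fst e"
definition hd_of :: "arc \<Rightarrow> nat" where "hd_of e = fst (snd e)"
definition kind_of :: "arc \<Rightarrow> arc_type" where "kind_of e = snd (snd e)"

definition is_arc :: "nat \<Rightarrow> (nat set \<Rightarrow> bool) \<Rightarrow> (nat \<Rightarrow> real^'d) \<Rightarrow> nat set \<Rightarrow> arc \<Rightarrow> bool" where
  "is_arc n indep v S e = (case e of
     (a, b, Back) \<Rightarrow> a \<in> S \<and> b \<in> {0..<n} - S \<and> indep (insert b (S - {a}))
   | (a, b, TypeI) \<Rightarrow> a \<in> {0..<n} - S \<and> b \<in> S \<and> span (v ` insert a (S - {b})) = UNIV
   | (a, b, TypeII) \<Rightarrow> a \<in> {0..<n} - S \<and> b \<in> S \<and> span (v ` insert a (S - {b})) = UNIV)"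

definition arc_weight :: "(nat \<Rightarrow> real^'d) \<Rightarrow> nat set \<Rightarrow> arc \<Rightarrow> ereal" where
  "arc_weight v S e = (case e of
     (a, b, Back) \<Rightarrow> 0
   | (a, b, TypeI) \<Rightarrow> neglog \<bar>ipS v S (v a) (v b)\<bar>
   | (a, b, TypeII) \<Rightarrow> neglog (sqrt ((1 + nrmsqS v S (v a)) * (1 - nrmsqS v S (v b)))))"

definition is_cycle :: "nat \<Rightarrow> (nat set \<Rightarrow> bool) \<Rightarrow> (nat \<Rightarrow> real^'d) \<Rightarrow> nat set \<Rightarrow> arc list \<Rightarrow> bool" where
  "is_cycle n indep v S C \<longleftrightarrow> C \<noteq> [] \<and> (\<forall>e\<in>set C. is_arc n indep v S e) \<and>
     (\<forall>i<length C. hd_of (C ! i) = tl_of (C ! ((i + 1) mod length C))) \<and>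
     distinct (map tl_of C)"

definition ver :: "arc list \<Rightarrow> nat set" where
  "ver C = set (map tl_of C)"

definition cycle_weight :: "(nat \<Rightarrow> real^'d) \<Rightarrow> nat set \<Rightarrow> arc list \<Rightarrow> ereal" where
  "cycle_weight v S C = sum_list (map (arc_weight v S) C)"

definition fbound :: "nat \<Rightarrow> real" where
  "fbound i = (if i = 1 then 2 else (fact i) ^ 11)"

definition f_violating :: "(nat \<Rightarrow> real^'d) \<Rightarrow> nat set \<Rightarrow> arc list \<Rightarrow> bool" where
  "f_violating v S C \<longleftrightarrow> cycle_weight v S C < ereal (- ln (fbound (length C div 2)))"

definition min_f_violating :: "nat \<Rightarrow> (nat set \<Rightarrow> bool) \<Rightarrow> (nat \<Rightarrow> real^'d) \<Rightarrow> nat set \<Rightarrow> arc list \<Rightarrow> bool" where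
  "min_f_violating n indep v S C \<longleftrightarrow> is_cycle n indep v S C \<and> f_violating v S C \<and>
     \<not> (\<exists>C'. is_cycle n indep v S C' \<and> ver C' \<subset> ver C \<and> f_violating v S C')"

end

theory Submission
  imports Defs
begin


lemma inv_props:
  fixes G :: "real^'d^'d"
  assumes "det G \<noteq> 0"
  shows "G ** matrix_inv G = mat 1" "matrix_inv G ** G = mat 1"
proof -
  have "invertible G" using assms invertible_det_nz by blast
  then have "\<exists>A'. G ** A' = mat 1 \<and> A' ** G = mat 1" unfolding invertible_def by blast
  then have "G ** matrix_inv G = mat 1 \<and> matrix_inv G ** G = mat 1"
    unfolding matrix_inv_def by (rule someI_ex)
  then show "G ** matrix_inv G = mat 1" "matrix_inv G ** G = mat 1" by auto
qed

lemma gram_mulv: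
  assumes "finite S"
  shows "gram v S *v y = (\<Sum>i\<in>S. (v i \<bullet> y) *\<^sub>R v i)"
  unfolding vec_eq_iff
proof
  fix a
  have "(gram v S *v y) $ a = (\<Sum>b\<in>UNIV. (\<Sum>i\<in>S. v i $ a * v i $ b) * y $ b)"
    by (simp add: matrix_vector_mult_def gram_def)
  also have "\<dots> = (\<Sum>i\<in>S. (\<Sum>b\<in>UNIV. v i $ a * v i $ b * y $ b))"
    by (simp add: sum_distrib_right sum.swap[of _ UNIV S])
  also have "\<dots> = (\<Sum>i\<in>S. (v i \<bullet> y) * v i $ a)"
    by (simp add: inner_vec_def sum_distrib_left sum_distrib_right mult_ac)
  also have "\<dots> = (\<Sum>i\<in>S. (v i \<bullet> y) *\<^sub>R v i) $ a"
    by (simp add: sum_component)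
  finally show "(gram v S *v y) $ a = (\<Sum>i\<in>S. (v i \<bullet> y) *\<^sub>R v i) $ a" .
qed

lemma gram_quad:
  assumes "finite S"
  shows "(gram v S *v y) \<bullet> y = (\<Sum>i\<in>S. (v i \<bullet> y)^2)"
  by (simp add: gram_mulv[OF assms] inner_sum_left inner_sum_right power2_eq_square inner_commute)

lemma inv_apply:
  fixes G :: "real^'d^'d"
  assumes "det G \<noteq> 0"
  shows "G *v (matrix_inv G *v x) = x" "matrix_inv G *v (G *v x) = x"
  by (simp_all add: matrix_vector_mul_assoc inv_props[OF assms])

lemma nrm_nonneg:
  assumes "finite S" "det (gram v S) \<noteq> 0"
  shows "nrmsqS v S x \<ge> 0"
proof -
  define y where "y = matrix_inv (gram v S) *v x"
  have x: "x = gram v S *v y" using inv_apply[OF assms(2)] y_def by simp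
  have "nrmsqS v S x = (gram v S *v y) \<bullet> y" unfolding nrmsqS_def ipS_def
    using x y_def by simp
  also have "\<dots> \<ge> 0" unfolding gram_quad[OF assms(1)] by (simp add: sum_nonneg)
  finally show ?thesis .
qed

lemma nrm_le1:
  assumes "finite S" "det (gram v S) \<noteq> 0" "b \<in> S"
  shows "nrmsqS v S (v b) \<le> 1"
proof -
  define y where "y = matrix_inv (gram v S) *v v b"
  have x: "v b = gram v S *v y" using inv_apply[OF assms(2)] y_def by simp
  define t where "t = nrmsqS v S (v b)"
  have t: "t = v b \<bullet> y" unfolding t_def nrmsqS_def ipS_def y_def by simp
  have "t = (gram v S *v y) \<bullet> y" using t x by simp
  also have "\<dots> = (\<Sum>i\<in>S. (v i \<bullet> y)^2)" by (rule gram_quad[OF assms(1)])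
  also have "\<dots> \<ge> (v b \<bullet> y)^2"
    using member_le_sum[of b S "\<lambda>i. (v i \<bullet> y)^2"] assms by simp
  finally have "t \<ge> t^2" using t by simp
  show ?thesis unfolding t_def[symmetric]
  proof (rule ccontr)
    assume "\<not> t \<le> 1"
    then have "t * 1 < t * t" by (intro mult_strict_left_mono) auto
    then show False using \<open>t \<ge> t^2\<close> by (simp add: power2_eq_square)
  qed
qed

lemma nrm_eq1:
  fixes v :: "nat \<Rightarrow> real^'d"
  assumes "finite S" "det (gram v S) \<noteq> 0" "b \<in> S" "span (v ` (S - {b})) \<noteq> UNIV"
  shows "nrmsqS v S (v b) = 1"
proof -
  have "dim (v ` (S - {b})) < DIM(real^'d)"
  proof -
    have "dim (v ` (S - {b})) \<noteq> DIM(real^'d)" using assms(4) dim_eq_full by blast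
    then show ?thesis using dim_subset_UNIV[of "v ` (S - {b})"] by linarith
  qed
  then obtain w where w: "w \<noteq> 0" "\<And>y. y \<in> span (v ` (S - {b})) \<Longrightarrow> orthogonal w y"
    by (rule orthogonal_to_subspace_exists) blast+
  have orth: "v i \<bullet> w = 0" if "i \<in> S - {b}" for i
  proof -
    have "v i \<in> span (v ` (S - {b}))" using that by (intro span_base) simp
    then have "orthogonal w (v i)" by (rule w(2))
    then show ?thesis by (simp add: orthogonal_def inner_commute)
  qed
  have Gw: "gram v S *v w = (v b \<bullet> w) *\<^sub>R v b"
  proof -
    have "gram v S *v w = (v b \<bullet> w) *\<^sub>R v b + (\<Sum>i\<in>S - {b}. (v i \<bullet> w) *\<^sub>R v i)"
      using gram_mulv[OF assms(1)] assms(1,3) by (simp add: sum.remove)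
    also have "(\<Sum>i\<in>S - {b}. (v i \<bullet> w) *\<^sub>R v i) = 0"
      by (rule sum.neutral) (simp add: orth)
    finally show ?thesis by simp
  qed
  define c where "c = v b \<bullet> w"
  have "c \<noteq> 0"
  proof
    assume "c = 0"
    then have "gram v S *v w = 0" using Gw c_def by simp
    then have "w = 0" using inv_apply(2)[OF assms(2), of w] by simp
    then show False using w(1) by simp
  qed
  have "matrix_inv (gram v S) *v v b = (1/c) *\<^sub>R w"
  proof -
    have "v b = (1/c) *\<^sub>R (gram v S *v w)" using Gw c_def \<open>c \<noteq> 0\<close> by simp
    then have "matrix_inv (gram v S) *v v b = matrix_inv (gram v S) *v ((1/c) *\<^sub>R (gram v S *v w))"
      by simp
    also have "\<dots> = (1/c) *\<^sub>R (matrix_inv (gram v S) *v (gram v S *v w))"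
      by (rule matrix_vector_mult_scaleR)
    finally have "matrix_inv (gram v S) *v v b = (1/c) *\<^sub>R (matrix_inv (gram v S) *v (gram v S *v w))" .
    then show ?thesis using inv_apply(2)[OF assms(2)] by simp
  qed
  then have "nrmsqS v S (v b) = (1/c) * (v b \<bullet> w)" unfolding nrmsqS_def ipS_def by simp
  also have "\<dots> = 1" unfolding c_def[symmetric] using \<open>c \<noteq> 0\<close> by simp
  finally show ?thesis .
qed



lemma fb_pos: "fbound k \<ge> 1"
  unfolding fbound_def by (auto intro!: one_le_power simp: fact_ge_1)

lemma fact_mult_le: "fact x * fact y \<le> (fact (x + y) :: nat)"
proof -
  have "fact x * fact y * ((x + y) choose x) = (fact (x + y) :: nat)"
    using binomial_fact_lemma[of x "x + y"] by simp
  moreover have "(x + y) choose x \<ge> 1" by (simp add: Suc_leI)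
  ultimately show ?thesis by (metis mult_le_mono2 nat_mult_1_right)
qed

lemma fb_super: "fbound x * fbound y \<le> fbound (x + y)"
proof -
  consider "x = 0" | "y = 0" | "x = 1" "y = 1" | "x = 1" "y \<ge> 2" | "x \<ge> 2" "y = 1" | "x \<ge> 2" "y \<ge> 2"
    by linarith
  then show ?thesis
  proof cases
    case 1 then show ?thesis by (simp add: fbound_def)
  next
    case 2 then show ?thesis by (simp add: fbound_def)
  next
    case 3 then show ?thesis by (simp add: fbound_def)
  next
    case 4
    have a: "fact (y + 1) = (real y + 1) * fact y" by (simp add: algebra_simps)
    have "(2::real) \<le> (real y + 1) ^ 11"
      proof -
      have "(2::real) \<le> real y + 1" using 4 by simp
      also have "\<dots> \<le> (real y + 1) ^ 11" by (rule self_le_power) auto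
      finally show ?thesis .
    qed
    then have "2 * (fact y) ^ 11 \<le> (real y + 1) ^ 11 * (fact y :: real) ^ 11"
      by (intro mult_right_mono) auto
    then show ?thesis using 4 a by (simp add: fbound_def power_mult_distrib add.commute)
  next
    case 5
    have a: "fact (x + 1) = (real x + 1) * fact x" by (simp add: algebra_simps)
    have "(2::real) \<le> (real x + 1) ^ 11"
      proof -
      have "(2::real) \<le> real x + 1" using 5 by simp
      also have "\<dots> \<le> (real x + 1) ^ 11" by (rule self_le_power) auto
      finally show ?thesis .
    qed
    then have "2 * (fact x) ^ 11 \<le> (real x + 1) ^ 11 * (fact x :: real) ^ 11"
      by (intro mult_right_mono) auto
    then have "(fact x) ^ 11 * 2 \<le> (real x + 1) ^ 11 * (fact x :: real) ^ 11"
      by (simp add: mult.commute)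
    then show ?thesis using 5 a by (simp add: fbound_def power_mult_distrib add.commute)
  next
    case 6
    have "real (fact x * fact y) \<le> real (fact (x + y))"
      using fact_mult_le of_nat_le_iff by blast
    then have "(fact x * fact y :: real) \<le> fact (x + y)" by (simp add: of_nat_fact)
    then have "(fact x * fact y :: real) ^ 11 \<le> fact (x + y) ^ 11"
      by (intro power_mono) auto
    then show ?thesis using 6 by (simp add: fbound_def power_mult_distrib)
  qed
qed

lemma fb_mono: "x \<le> y \<Longrightarrow> fbound x \<le> fbound y"
proof -
  assume "x \<le> y"
  then have "fbound x * fbound (y - x) \<le> fbound y" using fb_super[of x "y - x"] by simp
  moreover have "fbound x \<le> fbound x * fbound (y - x)"
    using fb_pos[of x] fb_pos[of "y - x"] by (simp add: mult_le_cancel_left1)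
  ultimately show ?thesis by linarith
qed

lemma fb_split: "fbound (a div 2) * fbound (b div 2) \<le> fbound ((a + b) div 2)"
  using fb_super[of "a div 2" "b div 2"] fb_mono[of "a div 2 + b div 2" "(a + b) div 2"] by linarith



definition lnk :: "arc \<Rightarrow> arc \<Rightarrow> bool" where "lnk e f \<longleftrightarrow> hd_of e = tl_of f"

lemma cyc_iff:
  assumes "C \<noteq> []"
  shows "(\<forall>i<length C. hd_of (C ! i) = tl_of (C ! ((i + 1) mod length C))) \<longleftrightarrow>
         successively lnk C \<and> lnk (last C) (hd C)"
proof -
  let ?m = "length C"
  have m: "?m > 0" using assms by simp
  have A: "(\<forall>i<?m. hd_of (C ! i) = tl_of (C ! ((i + 1) mod ?m))) \<longleftrightarrow>
        (\<forall>i. Suc i < ?m \<longrightarrow> lnk (C ! i) (C ! Suc i)) \<and> lnk (C ! (?m - 1)) (C ! 0)"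
  proof
    assume H: "\<forall>i<?m. hd_of (C ! i) = tl_of (C ! ((i + 1) mod ?m))"
    have "lnk (C ! i) (C ! Suc i)" if "Suc i < ?m" for i
      using H[rule_format, of i] that by (simp add: lnk_def)
    moreover have "lnk (C ! (?m - 1)) (C ! 0)"
      using H[rule_format, of "?m - 1"] m by (simp add: lnk_def)
    ultimately show "(\<forall>i. Suc i < ?m \<longrightarrow> lnk (C ! i) (C ! Suc i)) \<and> lnk (C ! (?m - 1)) (C ! 0)"
      by blast
  next
    assume H: "(\<forall>i. Suc i < ?m \<longrightarrow> lnk (C ! i) (C ! Suc i)) \<and> lnk (C ! (?m - 1)) (C ! 0)"
    show "\<forall>i<?m. hd_of (C ! i) = tl_of (C ! ((i + 1) mod ?m))"
    proof (intro allI impI)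
      fix i assume i: "i < ?m"
      show "hd_of (C ! i) = tl_of (C ! ((i + 1) mod ?m))"
      proof (cases "Suc i < ?m")
        case True then show ?thesis using H by (simp add: lnk_def)
      next
        case False
        then have "Suc i = ?m" using i by simp
        then have "i = ?m - 1" "(i + 1) mod ?m = 0" by auto
        then show ?thesis using H by (simp add: lnk_def)
      qed
    qed
  qed
  show ?thesis unfolding A successively_conv_nth
    using assms by (simp add: last_conv_nth hd_conv_nth)
qed

lemma cyc_rot:
  assumes "X @ Y \<noteq> []"
  shows "(successively lnk (X @ Y) \<and> lnk (last (X @ Y)) (hd (X @ Y))) \<longleftrightarrow>
         (successively lnk (Y @ X) \<and> lnk (last (Y @ X)) (hd (Y @ X)))"
  using assms by (cases "X = []"; cases "Y = []") (auto simp: successively_append_iff)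

lemma sum_list_inf:
  fixes xs :: "ereal list"
  assumes "\<forall>x\<in>set xs. x \<noteq> -\<infinity>" "\<infinity> \<in> set xs"
  shows "sum_list xs = \<infinity>"
  using assms
proof (induction xs)
  case Nil then show ?case by simp
next
  case (Cons a xs)
  show ?case
  proof (cases "a = \<infinity>")
    case True
    have "sum_list xs \<noteq> -\<infinity>"
    proof -
      have "\<forall>x\<in>set xs. x \<noteq> -\<infinity>" using Cons.prems by simp
      then show ?thesis
      proof (induction xs)
        case Nil then show ?case by simp
      next
        case (Cons b ys) then show ?case by simp
      qed
    qed
    then show ?thesis using True by simp
  next
    case False
    then have "sum_list xs = \<infinity>" using Cons by simp
    then show ?thesis using Cons.prems by simp
  qed
qed

lemma neglog_not_minf: "neglog x \<noteq> -\<infinity>"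
  by (simp add: neglog_def)

lemma aw_not_minf: "arc_weight v S e \<noteq> -\<infinity>"
  by (cases e) (auto simp: arc_weight_def neglog_not_minf split: arc_type.splits)



lemma w2:
  assumes "nrmsqS v S (v a) \<ge> 0" "1 - nrmsqS v S (v b) > 0"
  shows "arc_weight v S (a, b, TypeII) =
    ereal (- ln (sqrt (1 + nrmsqS v S (v a))) - ln (sqrt (1 - nrmsqS v S (v b))))"
proof -
  let ?x = "1 + nrmsqS v S (v a)" and ?y = "1 - nrmsqS v S (v b)"
  have px: "sqrt ?x > 0" and py: "sqrt ?y > 0" using assms by auto
  have "sqrt (?x * ?y) = sqrt ?x * sqrt ?y" by (rule real_sqrt_mult)
  moreover have "ln (sqrt ?x * sqrt ?y) = ln (sqrt ?x) + ln (sqrt ?y)" using px py by (rule ln_mult_pos)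
  ultimately show ?thesis using px py by (simp add: arc_weight_def neglog_def)
qed

lemma seg1:
  assumes "successively lnk (e0 # B @ e1 # D) \<and> lnk (last (e0 # B @ e1 # D)) (hd (e0 # B @ e1 # D))"
    "hd_of f = hd_of e1" "tl_of f = tl_of e0"
  shows "successively lnk (f # D) \<and> lnk (last (f # D)) (hd (f # D))"
  using assms by (cases "D = []") (auto simp: successively_append_iff successively_Cons lnk_def)

lemma seg2:
  assumes "successively lnk (e0 # B @ e1 # D) \<and> lnk (last (e0 # B @ e1 # D)) (hd (e0 # B @ e1 # D))"
    "hd_of f = hd_of e0" "tl_of f = tl_of e1"
  shows "successively lnk (f # B) \<and> lnk (last (f # B)) (hd (f # B))"
  using assms by (cases "B = []") (auto simp: successively_append_iff successively_Cons lnk_def)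

lemma core:
  fixes v :: "nat \<Rightarrow> real^'d"
  assumes fin: "finite S" and det: "det (gram v S) \<noteq> 0"
    and cyc: "is_cycle n indep v S C" and viol: "f_violating v S C"
    and minl: "\<forall>C'. is_cycle n indep v S C' \<and> ver C' \<subset> ver C \<longrightarrow> \<not> f_violating v S C'"
    and C: "C = e0 # B @ e1 # D" and k0: "kind_of e0 = TypeII" and k1: "kind_of e1 = TypeII"
  shows False
proof -
  obtain u1 v1 where e0: "e0 = (u1, v1, TypeII)" using k0 by (cases e0) (auto simp: kind_of_def)
  obtain u2 v2 where e1: "e1 = (u2, v2, TypeII)" using k1 by (cases e1) (auto simp: kind_of_def)
  have arcs: "\<forall>e\<in>set C. is_arc n indep v S e" using cyc by (simp add: is_cycle_def)
  have a0: "u1 \<in> {0..<n} - S" "v1 \<in> S" "span (v ` insert u1 (S - {v1})) = UNIV"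
    using arcs C e0 by (auto simp: is_arc_def)
  have a1: "u2 \<in> {0..<n} - S" "v2 \<in> S" "span (v ` insert u2 (S - {v2})) = UNIV"
    using arcs C e1 by (auto simp: is_arc_def)
  let ?N = "nrmsqS v S"
  have wfin: "arc_weight v S e \<noteq> \<infinity>" if "e \<in> set C" for e
  proof
    assume "arc_weight v S e = \<infinity>"
    then have "\<infinity> \<in> set (map (arc_weight v S) C)" using that by force
    moreover have "\<forall>x\<in>set (map (arc_weight v S) C). x \<noteq> -\<infinity>"
    proof
      fix x assume "x \<in> set (map (arc_weight v S) C)"
      then obtain e where "x = arc_weight v S e" by auto
      then show "x \<noteq> -\<infinity>"
        by (cases e) (auto simp: arc_weight_def neglog_def split: arc_type.splits)
    qed
    ultimately have "cycle_weight v S C = \<infinity>" unfolding cycle_weight_def by (rule sum_list_inf[rotated])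
    then show False using viol by (simp add: f_violating_def)
  qed
  have nz: "1 - ?N (v b) \<noteq> 0" if "(a, b, TypeII) \<in> set C" for a b
  proof
    assume "1 - ?N (v b) = 0"
    then have "arc_weight v S (a, b, TypeII) = \<infinity>" by (simp add: arc_weight_def neglog_def)
    then show False using wfin that by blast
  qed
  have pos: "1 - ?N (v b) > 0" if "(a, b, TypeII) \<in> set C" "b \<in> S" for a b
    using nz[OF that(1)] nrm_le1[OF fin det that(2)] by linarith
  have sp: "span (v ` (S - {b})) = UNIV" if "(a, b, TypeII) \<in> set C" "b \<in> S" for a b
    using nz[OF that(1)] nrm_eq1[OF fin det that(2)] by auto
  have in0: "(u1, v1, TypeII) \<in> set C" and in1: "(u2, v2, TypeII) \<in> set C" using C e0 e1 by auto
  have p1: "1 - ?N (v v1) > 0" using pos[OF in0 a0(2)] .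
  have p2: "1 - ?N (v v2) > 0" using pos[OF in1 a1(2)] .
  have sp1: "span (v ` (S - {v1})) = UNIV" using sp[OF in0 a0(2)] .
  have sp2: "span (v ` (S - {v2})) = UNIV" using sp[OF in1 a1(2)] .
  have n1: "?N (v u1) \<ge> 0" and n2: "?N (v u2) \<ge> 0" using nrm_nonneg[OF fin det] by auto
  define f0 where "f0 = (u1, v2, TypeII)"
  define f1 where "f1 = (u2, v1, TypeII)"
  define C1 where "C1 = f0 # D"
  define C2 where "C2 = f1 # B"
  have wsum: "arc_weight v S e0 + arc_weight v S e1 = arc_weight v S f0 + arc_weight v S f1"
    unfolding e0 e1 f0_def f1_def using w2[OF n1 p1] w2[OF n2 p2] w2[OF n1 p2] w2[OF n2 p1]
    by (simp add: algebra_simps)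
  have cC: "successively lnk C \<and> lnk (last C) (hd C)"
    using cyc cyc_iff[of C] by (simp add: is_cycle_def)
  have distC: "distinct (map tl_of C)" using cyc by (simp add: is_cycle_def)
  have cyc1: "is_cycle n indep v S C1"
  proof -
    have "is_arc n indep v S f0"
    proof -
      have "span (v ` (S - {v2})) \<subseteq> span (v ` insert u1 (S - {v2}))"
        by (intro span_mono image_mono) auto
      then show ?thesis using a0 a1 sp2 by (auto simp: is_arc_def f0_def)
    qed
    moreover have "\<forall>e\<in>set D. is_arc n indep v S e" using arcs C by auto
    moreover have "successively lnk C1 \<and> lnk (last C1) (hd C1)"
      unfolding C1_def by (rule seg1[of e0 B e1]) (use cC C e0 e1 f0_def in \<open>auto simp: hd_of_def tl_of_def\<close>)
    moreover have "distinct (map tl_of C1)" using distC C e0 f0_def C1_def by (auto simp: tl_of_def)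
    ultimately show ?thesis unfolding is_cycle_def using cyc_iff[of C1] C1_def by auto
  qed
  have cyc2: "is_cycle n indep v S C2"
  proof -
    have "is_arc n indep v S f1"
    proof -
      have "span (v ` (S - {v1})) \<subseteq> span (v ` insert u2 (S - {v1}))"
        by (intro span_mono image_mono) auto
      then show ?thesis using a0 a1 sp1 by (auto simp: is_arc_def f1_def)
    qed
    moreover have "\<forall>e\<in>set B. is_arc n indep v S e" using arcs C by auto
    moreover have "successively lnk C2 \<and> lnk (last C2) (hd C2)"
      unfolding C2_def by (rule seg2[of e0 B e1 D]) (use cC C e0 e1 f1_def in \<open>auto simp: hd_of_def tl_of_def\<close>)
    moreover have "distinct (map tl_of C2)" using distC C e1 f1_def C2_def by (auto simp: tl_of_def)
    ultimately show ?thesis unfolding is_cycle_def using cyc_iff[of C2] C2_def by auto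
  qed
  have tl0: "tl_of e0 = u1" "tl_of e1 = u2" "tl_of f0 = u1" "tl_of f1 = u2"
    using e0 e1 f0_def f1_def by (auto simp: tl_of_def)
  have ver1: "ver C1 \<subset> ver C"
  proof -
    have "u2 \<notin> ver C1" using distC tl0 unfolding C C1_def ver_def by auto
    moreover have "u2 \<in> ver C" using tl0 unfolding C ver_def by auto
    moreover have "ver C1 \<subseteq> ver C" using tl0 unfolding C C1_def ver_def by auto
    ultimately show ?thesis by blast
  qed
  have ver2: "ver C2 \<subset> ver C"
  proof -
    have "u1 \<notin> ver C2" using distC tl0 unfolding C C2_def ver_def by auto
    moreover have "u1 \<in> ver C" using tl0 unfolding C ver_def by auto
    moreover have "ver C2 \<subseteq> ver C" using tl0 unfolding C C2_def ver_def by auto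
    ultimately show ?thesis by blast
  qed
  have nv1: "\<not> f_violating v S C1" using minl cyc1 ver1 by blast
  have nv2: "\<not> f_violating v S C2" using minl cyc2 ver2 by blast
  define F1 where "F1 = fbound (length C1 div 2)"
  define F2 where "F2 = fbound (length C2 div 2)"
  define F where "F = fbound (length C div 2)"
  have len: "length C = length C1 + length C2" unfolding C C1_def C2_def by simp
  have FF: "F1 * F2 \<le> F" unfolding F1_def F2_def F_def len by (rule fb_split)
  have F1p: "F1 > 0" and F2p: "F2 > 0" using fb_pos F1_def F2_def
    by (metis less_le_trans zero_less_one)+
  have w1: "cycle_weight v S C1 \<ge> ereal (- ln F1)" using nv1 by (simp add: f_violating_def F1_def not_less)
  have w2': "cycle_weight v S C2 \<ge> ereal (- ln F2)" using nv2 by (simp add: f_violating_def F2_def not_less)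
  have cw: "cycle_weight v S C = cycle_weight v S C1 + cycle_weight v S C2"
  proof -
    let ?w = "arc_weight v S" and ?W = "\<lambda>L. sum_list (map (arc_weight v S) L)"
    have "cycle_weight v S C = (?w e0 + ?w e1) + (?W B + ?W D)"
      unfolding C cycle_weight_def by (simp add: add_ac)
    also have "\<dots> = (?w f0 + ?w f1) + (?W B + ?W D)" using wsum by simp
    also have "\<dots> = cycle_weight v S C1 + cycle_weight v S C2"
      unfolding C1_def C2_def cycle_weight_def by (simp add: add_ac)
    finally show ?thesis .
  qed
  have "ereal (- ln F1) + ereal (- ln F2) \<le> cycle_weight v S C"
    unfolding cw using w1 w2' by (rule add_mono)
  moreover have "ereal (- ln F) \<le> ereal (- ln F1) + ereal (- ln F2)"
  proof -
    have pp: "F1 * F2 > 0" using F1p F2p by simp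
    then have "F > 0" using FF by linarith
    then have "ln (F1 * F2) \<le> ln F" using FF pp ln_le_cancel_iff by blast
    then have "- ln F \<le> - ln F1 - ln F2" using ln_mult_pos[OF F1p F2p] by simp
    then show ?thesis by simp
  qed
  ultimately have "ereal (- ln F) \<le> cycle_weight v S C" by (rule order_trans[rotated])
  then show False using viol by (simp add: f_violating_def F_def)
qed



theorem mainTheorem5:
  fixes v :: "nat \<Rightarrow> real^'d" and n :: nat and indep :: "nat set \<Rightarrow> bool"
    and S :: "nat set" and C :: "arc list"
  assumes "matroid {0..<n} indep"
    and "is_basis indep S"
    and "det (gram v S) > 0"
    and "min_f_violating n indep v S C"
  shows "length (filter (\<lambda>e. kind_of e = TypeII) C) \<le> 1"
proof (rule ccontr)
  let ?P = "\<lambda>e. kind_of e = TypeII"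
  assume "\<not> length (filter ?P C) \<le> 1"
  then obtain x y rest where xy: "filter ?P C = x # y # rest"
    by (cases "filter ?P C"; cases "tl (filter ?P C)") auto
  obtain A C' where AC: "C = A @ x # C'" "?P x" "y # rest = filter ?P C'"
    using filter_eq_ConsD[OF xy] by blast
  obtain B D where BD: "C' = B @ y # D" "?P y"
    using filter_eq_ConsD[OF AC(3)[symmetric]] by blast
  have fin: "finite S"
  proof -
    have "indep S" using assms(2) by (simp add: is_basis_def)
    then have "S \<subseteq> {0..<n}" using assms(1) by (simp add: matroid_def)
    then show ?thesis using finite_subset by blast
  qed
  have det: "det (gram v S) \<noteq> 0" using assms(3) by simp
  have C: "C = A @ (x # B @ y # D)" using AC BD by simp
  define Cr where "Cr = x # B @ y # (D @ A)"
  have Cr: "Cr = (x # B @ y # D) @ A" unfolding Cr_def by simp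
  have cyc: "is_cycle n indep v S C" and viol: "f_violating v S C"
    and minl: "\<forall>C'. is_cycle n indep v S C' \<and> ver C' \<subset> ver C \<longrightarrow> \<not> f_violating v S C'"
    using assms(4) by (auto simp: min_f_violating_def)
  have setr: "set Cr = set C" unfolding Cr C by auto
  have verr: "ver Cr = ver C" unfolding ver_def using setr by simp
  have lenr: "length Cr = length C" unfolding Cr C by simp
  have cwr: "cycle_weight v S Cr = cycle_weight v S C"
    unfolding Cr C cycle_weight_def by (simp add: add_ac)
  have cycr: "is_cycle n indep v S Cr"
  proof -
    have c1: "(\<forall>i<length C. hd_of (C ! i) = tl_of (C ! ((i + 1) mod length C)))"
      using cyc by (simp add: is_cycle_def)
    then have "successively lnk C \<and> lnk (last C) (hd C)" using cyc_iff[of C] C by simp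
    then have "successively lnk Cr \<and> lnk (last Cr) (hd Cr)"
      unfolding C Cr using cyc_rot[of A "x # B @ y # D"] by simp
    then have c2: "(\<forall>i<length Cr. hd_of (Cr ! i) = tl_of (Cr ! ((i + 1) mod length Cr)))"
      using cyc_iff[of Cr] Cr_def by simp
    have "distinct (map tl_of C)" using cyc by (simp add: is_cycle_def)
    then have d: "distinct (map tl_of Cr)" unfolding C Cr by (auto simp: distinct_append)
    show ?thesis using cyc c2 d setr Cr_def by (simp add: is_cycle_def)
  qed
  have violr: "f_violating v S Cr" using viol cwr lenr by (simp add: f_violating_def)
  have minr: "\<forall>C'. is_cycle n indep v S C' \<and> ver C' \<subset> ver Cr \<longrightarrow> \<not> f_violating v S C'"
    using minl verr by simp
  show False
    by (rule core[OF fin det cycr violr minr Cr_def AC(2) BD(2)])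
qed


end
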